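(* Let $X$ and $Y$ be Dedekind complete Riesz spaces and $f:X\to Y$ an order continuous increasing map. Then: (i) $f$ extends to a unique left order continuous increasing map $f^{s}:X^{s}\to Y^{s}$; if $f$ is additive (resp. positively homogeneous), so is $f^{s}$. (ii) If $f$ is only defined from $X_{+}$ to $Y_{+}$ (and is order continuous and increasing there), then $f$ has a unique left order continuous increasing extension $f^{s}:X^{s}_{+}\to Y^{s}_{+}$; if $f$ is additive (resp. positively homogeneous), so is $f^{s}$. (iii) If moreover $Y=X$, $f$ is a linear projection and $f(X)$ is a Riesz subspace of $X$, then $f(X)$ is a regular Riesz subspace of $X$ and $f^{s}(X^{s})=f(X)^{s}$. (iv) If moreover $Y=X$, $f$ is linear, and $Z$ is a regular Riesz subspace of $X$ invariant under $f$, then $Z^{s}$ is invariant under $f^{s}$.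
   Context: For a Dedekind complete Riesz space $X$, its sup-completion $X^{s}$ is the set of classes of nonempty upward directed subsets of $X$ under $A\sim B$ iff $\sup_{a\in A}(x\wedge a)=\sup_{b\in B}(x\wedge b)$ for all $x\in X$, with the induced addition, nonnegative scalar multiplication and order; $X\subseteq X^s$ via $x\mapsto[\{x\}]$; every nonempty subset of $X^{s}$ has a supremum and every element is the supremum of the elements of $X$ below it. A map $g$ is left order continuous if $x_\alpha\uparrow x$ implies $g(x_\alpha)\uparrow g(x)$. A Riesz subspace $Z$ of $X$ is regular if suprema of subsets of $Z$ computed in $Z$ agree with those computed in $X$; for such $Z$, $Z^{s}$ is identified with $\{\sup A:\emptyset\ne A\subseteq Z\}\subseteq X^{s}$. *)

theory Defs
  imports Complex_Main
begin

class dc_riesz_space = ordered_real_vector + conditionally_complete_lattice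

definition updir :: "'a::order set \<Rightarrow> bool" where
  "updir A \<longleftrightarrow> (\<forall>a\<in>A. \<forall>b\<in>A. \<exists>c\<in>A. a \<le> c \<and> b \<le> c)"

definition downdir :: "'a::order set \<Rightarrow> bool" where
  "downdir A \<longleftrightarrow> (\<forall>a\<in>A. \<forall>b\<in>A. \<exists>c\<in>A. c \<le> a \<and> c \<le> b)"

definition is_lub_on :: "'a::order set \<Rightarrow> 'a set \<Rightarrow> 'a \<Rightarrow> bool" where
  "is_lub_on S A z \<longleftrightarrow> z \<in> S \<and> (\<forall>a\<in>A. a \<le> z) \<and> (\<forall>w\<in>S. (\<forall>a\<in>A. a \<le> w) \<longrightarrow> z \<le> w)"

definition is_glb :: "'a::order set \<Rightarrow> 'a \<Rightarrow> bool" where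
  "is_glb D z \<longleftrightarrow> (\<forall>d\<in>D. z \<le> d) \<and> (\<forall>l. (\<forall>d\<in>D. l \<le> d) \<longrightarrow> l \<le> z)"

text \<open>Order convergence of a net, expressed through its image filter F (F = bot excluded):
  there is a set D downward directed to 0 with |y - x| \<le> d eventually, for every d in D.\<close>
definition ord_conv :: "'a::dc_riesz_space filter \<Rightarrow> 'a \<Rightarrow> bool" where
  "ord_conv F x \<longleftrightarrow> (\<exists>D. D \<noteq> {} \<and> downdir D \<and> is_glb D 0 \<and>
      (\<forall>d\<in>D. eventually (\<lambda>y. sup (y - x) (x - y) \<le> d) F))"

definition order_continuous :: "('a::dc_riesz_space \<Rightarrow> 'b::dc_riesz_space) \<Rightarrow> bool" where
  "order_continuous f \<longleftrightarrow>
     (\<forall>F x. F \<noteq> bot \<longrightarrow> ord_conv F x \<longrightarrow> ord_conv (filtermap f F) (f x))"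

definition order_continuous_pos :: "('a::dc_riesz_space \<Rightarrow> 'b::dc_riesz_space) \<Rightarrow> bool" where
  "order_continuous_pos f \<longleftrightarrow>
     (\<forall>F x. F \<noteq> bot \<longrightarrow> eventually (\<lambda>y. 0 \<le> y) F \<longrightarrow> 0 \<le> x \<longrightarrow>
        ord_conv F x \<longrightarrow> ord_conv (filtermap f F) (f x))"

definition riesz_subspace :: "'a::dc_riesz_space set \<Rightarrow> bool" where
  "riesz_subspace Z \<longleftrightarrow> subspace Z \<and> (\<forall>x\<in>Z. \<forall>y\<in>Z. sup x y \<in> Z \<and> inf x y \<in> Z)"

definition regular_subspace :: "'a::dc_riesz_space set \<Rightarrow> bool" where
  "regular_subspace Z \<longleftrightarrow> riesz_subspace Z \<and>
     (\<forall>A z. A \<noteq> {} \<longrightarrow> A \<subseteq> Z \<longrightarrow> is_lub_on Z A z \<longrightarrow> is_lub_on UNIV A z)"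

definition Dirs :: "'a::dc_riesz_space set set" where
  "Dirs = {A. A \<noteq> {} \<and> updir A}"

definition scut :: "'a::dc_riesz_space set \<Rightarrow> 'a \<Rightarrow> 'a" where
  "scut A x = Sup ((\<lambda>a. inf x a) ` A)"

definition srel :: "('a::dc_riesz_space set \<times> 'a set) set" where
  "srel = {(A, B). A \<in> Dirs \<and> B \<in> Dirs \<and> (\<forall>x. scut A x = scut B x)}"

text \<open>The sup-completion X^s as the set of equivalence classes.\<close>
definition SC :: "'a::dc_riesz_space set set set" where
  "SC = Dirs // srel"

definition semb :: "'a::dc_riesz_space \<Rightarrow> 'a set set" where
  "semb x = srel `` {{x}}"

definition srep :: "'a::dc_riesz_space set set \<Rightarrow> 'a set" where
  "srep u = (SOME A. A \<in> u)"

definition sle :: "'a::dc_riesz_space set set \<Rightarrow> 'a set set \<Rightarrow> bool" where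
  "sle u v \<longleftrightarrow> (\<forall>x. scut (srep u) x \<le> scut (srep v) x)"

definition sadd :: "'a::dc_riesz_space set set \<Rightarrow> 'a set set \<Rightarrow> 'a set set" where
  "sadd u v = srel `` {{a + b | a b. a \<in> srep u \<and> b \<in> srep v}}"

definition ssmul :: "real \<Rightarrow> 'a::dc_riesz_space set set \<Rightarrow> 'a set set" where
  "ssmul t u = srel `` {(\<lambda>a. t *\<^sub>R a) ` srep u}"

definition SCpos :: "'a::dc_riesz_space set set set" where
  "SCpos = {u \<in> SC. sle (semb 0) u}"

definition is_slub :: "'a::dc_riesz_space set set set \<Rightarrow> 'a set set \<Rightarrow> bool" where
  "is_slub S u \<longleftrightarrow> u \<in> SC \<and> (\<forall>v\<in>S. sle v u) \<and> (\<forall>w\<in>SC. (\<forall>v\<in>S. sle v w) \<longrightarrow> sle u w)"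

definition sdir :: "'a::dc_riesz_space set set set \<Rightarrow> bool" where
  "sdir D \<longleftrightarrow> (\<forall>u\<in>D. \<forall>v\<in>D. \<exists>w\<in>D. sle u w \<and> sle v w)"

definition sincr :: "'a::dc_riesz_space set set set \<Rightarrow> ('a set set \<Rightarrow> 'b::dc_riesz_space set set) \<Rightarrow> bool" where
  "sincr S g \<longleftrightarrow> (\<forall>u\<in>S. \<forall>v\<in>S. sle u v \<longrightarrow> sle (g u) (g v))"

text \<open>Left order continuity on S: x_alpha increasing to x implies g(x_alpha) increasing to g(x);
  increasing nets are represented by their (upward directed) ranges.\<close>
definition left_oc :: "'a::dc_riesz_space set set set \<Rightarrow> ('a set set \<Rightarrow> 'b::dc_riesz_space set set) \<Rightarrow> bool" where
  "left_oc S g \<longleftrightarrow> (\<forall>D u. D \<subseteq> S \<longrightarrow> D \<noteq> {} \<longrightarrow> sdir D \<longrightarrow> u \<in> S \<longrightarrow> is_slub D u \<longrightarrow>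
      is_slub (g ` D) (g u))"

definition sadditive :: "'a::dc_riesz_space set set set \<Rightarrow> ('a set set \<Rightarrow> 'b::dc_riesz_space set set) \<Rightarrow> bool" where
  "sadditive S g \<longleftrightarrow> (\<forall>u\<in>S. \<forall>v\<in>S. g (sadd u v) = sadd (g u) (g v))"

definition sposhom :: "'a::dc_riesz_space set set set \<Rightarrow> ('a set set \<Rightarrow> 'b::dc_riesz_space set set) \<Rightarrow> bool" where
  "sposhom S g \<longleftrightarrow> (\<forall>t::real. \<forall>u\<in>S. 0 \<le> t \<longrightarrow> g (ssmul t u) = ssmul t (g u))"

definition is_sup_ext :: "('a::dc_riesz_space \<Rightarrow> 'b::dc_riesz_space) \<Rightarrow> ('a set set \<Rightarrow> 'b set set) \<Rightarrow> bool" where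
  "is_sup_ext f g \<longleftrightarrow> (\<forall>u\<in>SC. g u \<in> SC) \<and> (\<forall>x. g (semb x) = semb (f x)) \<and>
     sincr SC g \<and> left_oc SC g"

definition is_sup_ext_pos :: "('a::dc_riesz_space \<Rightarrow> 'b::dc_riesz_space) \<Rightarrow> ('a set set \<Rightarrow> 'b set set) \<Rightarrow> bool" where
  "is_sup_ext_pos f g \<longleftrightarrow> (\<forall>u\<in>SCpos. g u \<in> SCpos) \<and> (\<forall>x. 0 \<le> x \<longrightarrow> g (semb x) = semb (f x)) \<and>
     sincr SCpos g \<and> left_oc SCpos g"

text \<open>Z^s for a regular Riesz subspace Z, as a subset of X^s.\<close>
definition sub_SC :: "'a::dc_riesz_space set \<Rightarrow> 'a set set set" where
  "sub_SC Z = {u. \<exists>A. A \<noteq> {} \<and> A \<subseteq> Z \<and> is_slub (semb ` A) u}"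

definition additive_map :: "('a::dc_riesz_space \<Rightarrow> 'b::dc_riesz_space) \<Rightarrow> bool" where
  "additive_map f \<longleftrightarrow> (\<forall>x y. f (x + y) = f x + f y)"

definition additive_pos :: "('a::dc_riesz_space \<Rightarrow> 'b::dc_riesz_space) \<Rightarrow> bool" where
  "additive_pos f \<longleftrightarrow> (\<forall>x y. 0 \<le> x \<longrightarrow> 0 \<le> y \<longrightarrow> f (x + y) = f x + f y)"

definition poshom_map :: "('a::dc_riesz_space \<Rightarrow> 'b::dc_riesz_space) \<Rightarrow> bool" where
  "poshom_map f \<longleftrightarrow> (\<forall>t::real. \<forall>x. 0 \<le> t \<longrightarrow> f (t *\<^sub>R x) = t *\<^sub>R f x)"

definition poshom_pos :: "('a::dc_riesz_space \<Rightarrow> 'b::dc_riesz_space) \<Rightarrow> bool" where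
  "poshom_pos f \<longleftrightarrow> (\<forall>t::real. \<forall>x. 0 \<le> t \<longrightarrow> 0 \<le> x \<longrightarrow> f (t *\<^sub>R x) = t *\<^sub>R f x)"

end

theory Submission
  imports Defs
begin


lemma add_eq_inf_sup:
  fixes a b :: "'a::dc_riesz_space"
  shows "a + b = sup a b + inf a b"
proof -
  have h1: "sup a b \<le> a + b - inf a b"
  proof (rule sup_least)
    have "inf a b \<le> b" by simp
    then show "a \<le> a + b - inf a b" by (simp add: le_diff_eq)
    have "inf a b \<le> a" by simp
    then show "b \<le> a + b - inf a b" by (simp add: le_diff_eq add.commute)
  qed
  have h2: "a + b - sup a b \<le> inf a b"
  proof (rule inf_greatest)
    have "b \<le> sup a b" by simp
    then show "a + b - sup a b \<le> a" by (simp add: diff_le_eq)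
    have "a \<le> sup a b" by simp
    then show "a + b - sup a b \<le> b" by (simp add: diff_le_eq add.commute)
  qed
  have "sup a b + inf a b \<le> a + b" using h1 by (simp only: le_diff_eq)
  moreover have "a + b \<le> inf a b + sup a b" using h2 by (simp only: diff_le_eq)
  moreover have "inf a b + sup a b = sup a b + inf a b" by (rule add.commute)
  ultimately show ?thesis by (intro order.antisym) simp_all
qed

lemma inf_Sup_distrib:
  fixes C :: "'a::dc_riesz_space set"
  assumes "C \<noteq> {}" "bdd_above C"
  shows "inf y (Sup C) = (SUP c\<in>C. inf y c)"
proof (rule order.antisym)
  let ?t = "SUP c\<in>C. inf y c"
  let ?s = "sup y (Sup C)"
  have bt: "bdd_above ((\<lambda>c. inf y c) ` C)" by (rule bdd_aboveI[of _ y]) auto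
  show "?t \<le> inf y (Sup C)"
    using assms by (intro cSUP_least) (auto intro: le_infI2 cSup_upper)
  have "c \<le> ?s + ?t - y" if "c \<in> C" for c
  proof -
    have "inf y c \<le> ?t" using bt that by (rule cSUP_upper2) simp
    moreover have "sup y c \<le> ?s" using that assms by (intro sup_mono order.refl cSup_upper)
    moreover have "y + c = sup y c + inf y c" by (rule add_eq_inf_sup)
    ultimately have "y + c \<le> ?s + ?t" using add_mono by metis
    then show ?thesis by (simp add: le_diff_eq add.commute)
  qed
  then have "Sup C \<le> ?s + ?t - y" using assms by (intro cSup_least) auto
  then have "y + Sup C \<le> ?s + ?t" by (simp add: le_diff_eq add.commute)
  moreover have "y + Sup C = ?s + inf y (Sup C)" by (rule add_eq_inf_sup)
  ultimately show "inf y (Sup C) \<le> ?t" by simp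
qed

definition prec :: "'a::dc_riesz_space set \<Rightarrow> 'a set \<Rightarrow> bool" where
  "prec A B \<longleftrightarrow> (\<forall>x. scut A x \<le> scut B x)"
definition low :: "'a::dc_riesz_space set \<Rightarrow> 'a set" where
  "low A = {x. scut A x = x}"
definition cl :: "'a::dc_riesz_space set \<Rightarrow> 'a set set" where
  "cl A = srel `` {A}"

lemma bdd_scut: "bdd_above ((\<lambda>a. inf x a) ` (A::'a::dc_riesz_space set))"
  by (rule bdd_aboveI[of _ x]) auto

lemma scut_le: "A \<noteq> {} \<Longrightarrow> scut A x \<le> x"
  unfolding scut_def by (rule cSUP_least) (simp_all add: inf.cobounded1)

lemma scut_ge: "a \<in> A \<Longrightarrow> inf x a \<le> scut A x"
  unfolding scut_def by (rule cSUP_upper[OF _ bdd_scut])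

lemma scut_mono: "A \<noteq> {} \<Longrightarrow> x \<le> y \<Longrightarrow> scut A x \<le> scut A y"
  unfolding scut_def
proof (rule cSUP_least)
  fix a assume "A \<noteq> {}" "x \<le> y" "a \<in> A"
  then show "inf x a \<le> Sup ((\<lambda>a. inf y a) ` A)"
    by (intro cSUP_upper2[OF bdd_scut, of a]) (simp_all add: le_infI1)
qed

lemma DirsD: "A \<in> Dirs \<Longrightarrow> A \<noteq> {}" "A \<in> Dirs \<Longrightarrow> a \<in> A \<Longrightarrow> b \<in> A \<Longrightarrow> \<exists>c\<in>A. a \<le> c \<and> b \<le> c"
  unfolding Dirs_def updir_def by auto

lemma DirsI: "A \<noteq> {} \<Longrightarrow> (\<And>a b. a \<in> A \<Longrightarrow> b \<in> A \<Longrightarrow> \<exists>c\<in>A. a \<le> c \<and> b \<le> c) \<Longrightarrow> A \<in> Dirs"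
  unfolding Dirs_def updir_def by blast

lemma low_I: "A \<noteq> {} \<Longrightarrow> x \<le> scut A x \<Longrightarrow> x \<in> low A"
  unfolding low_def using scut_le by (auto intro: antisym)

lemma mem_low: "a \<in> A \<Longrightarrow> a \<in> low A"
  by (rule low_I) (auto intro: scut_ge[of a A a, simplified])

lemma low_down:
  assumes "A \<noteq> {}" "x \<in> low A" "y \<le> x"
  shows "y \<in> low A"
proof -
  have "scut A y = (SUP a\<in>A. inf y (inf x a))"
    unfolding scut_def using assms(3)
    by (simp add: inf.assoc[symmetric] inf.absorb1)
  also have "\<dots> = inf y (SUP a\<in>A. inf x a)"
    using assms(1) by (subst inf_Sup_distrib) (auto simp: bdd_scut image_image)
  also have "\<dots> = y" using assms(2,3) unfolding low_def scut_def by (simp add: inf.absorb1)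
  finally show ?thesis unfolding low_def by simp
qed

lemma low_Sup:
  assumes "A \<noteq> {}" "C \<noteq> {}" "bdd_above C" "C \<subseteq> low A"
  shows "Sup C \<in> low A"
proof (rule low_I[OF assms(1)])
  show "Sup C \<le> scut A (Sup C)"
  proof (rule cSup_least[OF assms(2)])
    fix c assume c: "c \<in> C"
    have "c = scut A c" using c assms(4) unfolding low_def by auto
    also have "\<dots> \<le> scut A (Sup C)" using c assms by (intro scut_mono cSup_upper) auto
    finally show "c \<le> scut A (Sup C)" .
  qed
qed

lemma low_sup:
  assumes "A \<noteq> {}" "x \<in> low A" "y \<in> low A"
  shows "sup x y \<in> low A"
proof (rule low_I[OF assms(1)])
  have "x \<le> scut A (sup x y)" using assms scut_mono[of A x "sup x y"] unfolding low_def by auto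
  moreover have "y \<le> scut A (sup x y)" using assms scut_mono[of A y "sup x y"] unfolding low_def by auto
  ultimately show "sup x y \<le> scut A (sup x y)" by simp
qed

lemma prec_iff:
  assumes "A \<noteq> {}" "B \<in> Dirs"
  shows "prec B A \<longleftrightarrow> B \<subseteq> low A"
proof
  assume "prec B A"
  show "B \<subseteq> low A"
  proof
    fix b assume b: "b \<in> B"
    have "b = scut B b" using mem_low[OF b] unfolding low_def by simp
    also have "\<dots> \<le> scut A b" using \<open>prec B A\<close> unfolding prec_def by auto
    finally show "b \<in> low A" by (rule low_I[OF assms(1)])
  qed
next
  assume sub: "B \<subseteq> low A"
  show "prec B A" unfolding prec_def
  proof
    fix y
    show "scut B y \<le> scut A y" unfolding scut_def
    proof (rule cSUP_least)
      show "B \<noteq> {}" using assms DirsD by auto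
      fix b assume b: "b \<in> B"
      have "inf y b \<in> low A" using low_down[OF assms(1), of b "inf y b"] sub b by auto
      then have "inf y b = scut A (inf y b)" unfolding low_def by simp
      also have "\<dots> \<le> scut A y" by (rule scut_mono[OF assms(1)]) simp
      finally show "inf y b \<le> Sup ((\<lambda>a. inf y a) ` A)" unfolding scut_def .
    qed
  qed
qed

lemma prec_refl: "prec A A" unfolding prec_def by simp
lemma prec_trans: "prec A B \<Longrightarrow> prec B C \<Longrightarrow> prec A C" unfolding prec_def by (meson order_trans)

lemma low_mono:
  assumes "A \<noteq> {}" "B \<noteq> {}" "prec A B" shows "low A \<subseteq> low B"
proof
  fix x assume "x \<in> low A"
  then have "scut A x = x" unfolding low_def by simp
  moreover have "scut A x \<le> scut B x" using assms(3) unfolding prec_def by simp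
  ultimately have "x \<le> scut B x" by simp
  then show "x \<in> low B" by (rule low_I[OF assms(2)])
qed

lemma low_cong: "scut A = scut B \<Longrightarrow> low A = low B"
  unfolding low_def by simp

lemma scut_eq_iff: "scut A = scut B \<longleftrightarrow> prec A B \<and> prec B A"
proof
  assume "scut A = scut B" then show "prec A B \<and> prec B A" unfolding prec_def by simp
next
  assume "prec A B \<and> prec B A"
  then have "scut A x = scut B x" for x unfolding prec_def by (meson order.antisym)
  then show "scut A = scut B" by (rule ext)
qed

lemma cl_mem_iff: "B \<in> cl A \<longleftrightarrow> A \<in> Dirs \<and> B \<in> Dirs \<and> scut A = scut B"
  unfolding cl_def srel_def Image_singleton_iff by (simp add: fun_eq_iff)

lemma cl_in_SC: "A \<in> Dirs \<Longrightarrow> cl A \<in> SC"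
  unfolding SC_def cl_def by (rule quotientI)

lemma SC_E: "u \<in> SC \<Longrightarrow> \<exists>A\<in>Dirs. u = cl A"
  unfolding SC_def cl_def by (auto elim: quotientE)

lemma srep_cl: "A \<in> Dirs \<Longrightarrow> srep (cl A) \<in> Dirs \<and> scut (srep (cl A)) = scut A"
proof -
  assume A: "A \<in> Dirs"
  have "A \<in> cl A" using A by (simp add: cl_mem_iff)
  then have "srep (cl A) \<in> cl A" unfolding srep_def by (rule someI)
  then show ?thesis by (simp add: cl_mem_iff)
qed

lemma cl_eq_iff: "A \<in> Dirs \<Longrightarrow> B \<in> Dirs \<Longrightarrow> cl A = cl B \<longleftrightarrow> scut A = scut B"
proof
  assume A: "A \<in> Dirs" and B: "B \<in> Dirs" and e: "cl A = cl B"
  have "B \<in> cl B" using B by (simp add: cl_mem_iff)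
  then have "B \<in> cl A" using e by simp
  then show "scut A = scut B" by (simp add: cl_mem_iff)
next
  assume A: "A \<in> Dirs" and B: "B \<in> Dirs" and e: "scut A = scut B"
  show "cl A = cl B" using A B e by (auto simp: cl_mem_iff)
qed

lemma SC_srep: "u \<in> SC \<Longrightarrow> srep u \<in> Dirs \<and> u = cl (srep u)"
proof -
  assume "u \<in> SC"
  then obtain A where A: "A \<in> Dirs" "u = cl A" using SC_E by blast
  have "cl (srep (cl A)) = cl A" using srep_cl[OF A(1)] A(1) cl_eq_iff by blast
  then show ?thesis using srep_cl[OF A(1)] A(2) by simp
qed

lemma sle_cl: "A \<in> Dirs \<Longrightarrow> B \<in> Dirs \<Longrightarrow> sle (cl A) (cl B) \<longleftrightarrow> prec A B"
  unfolding sle_def prec_def by (simp add: srep_cl)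

lemma semb_cl: "semb x = cl {x}" unfolding semb_def cl_def ..

lemma single_Dirs: "{x} \<in> Dirs" by (rule DirsI) auto

lemma sle_antisym:
  assumes "u \<in> SC" "v \<in> SC" "sle u v" "sle v u" shows "u = v"
proof -
  have u: "srep u \<in> Dirs" "u = cl (srep u)" and v: "srep v \<in> Dirs" "v = cl (srep v)"
    using SC_srep assms(1,2) by auto
  have "sle (cl (srep u)) (cl (srep v))" "sle (cl (srep v)) (cl (srep u))"
    using assms(3,4) by (simp_all only: u(2)[symmetric] v(2)[symmetric])
  then have "prec (srep u) (srep v)" "prec (srep v) (srep u)"
    using sle_cl[OF u(1) v(1)] sle_cl[OF v(1) u(1)] by simp_all
  then have "scut (srep u) = scut (srep v)" by (simp add: scut_eq_iff)
  then have "cl (srep u) = cl (srep v)" using cl_eq_iff[OF u(1) v(1)] by simp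
  then show ?thesis using u(2) v(2) by simp
qed

lemma slub_unique: "is_slub D u \<Longrightarrow> is_slub D v \<Longrightarrow> u = v"
  unfolding is_slub_def using sle_antisym by meson

definition Lw :: "'a::dc_riesz_space set set \<Rightarrow> 'a set" where
  "Lw u = low (srep u)"

lemma sle_iff_Lw:
  assumes "u \<in> SC" "v \<in> SC" shows "sle u v \<longleftrightarrow> srep u \<subseteq> Lw v"
proof -
  have u: "srep u \<in> Dirs" "u = cl (srep u)" and v: "srep v \<in> Dirs" "v = cl (srep v)"
    using SC_srep assms(1,2) by auto
  have "sle u v \<longleftrightarrow> sle (cl (srep u)) (cl (srep v))"
    by (simp only: u(2)[symmetric] v(2)[symmetric])
  also have "\<dots> \<longleftrightarrow> prec (srep u) (srep v)" by (rule sle_cl[OF u(1) v(1)])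
  also have "\<dots> \<longleftrightarrow> srep u \<subseteq> Lw v" unfolding Lw_def
    using prec_iff[OF DirsD(1)[OF v(1)] u(1)] .
  finally show ?thesis .
qed

lemma Lw_cl: "A \<in> Dirs \<Longrightarrow> Lw (cl A) = low A"
  unfolding Lw_def by (rule low_cong) (simp add: srep_cl)

lemma sle_semb_iff:
  assumes "u \<in> SC" shows "sle (semb x) u \<longleftrightarrow> x \<in> Lw u"
proof -
  have s: "semb x \<in> SC" unfolding semb_cl by (rule cl_in_SC[OF single_Dirs])
  have "sle (semb x) u \<longleftrightarrow> srep (semb x) \<subseteq> Lw u" by (rule sle_iff_Lw[OF s assms])
  also have "\<dots> \<longleftrightarrow> {x} \<subseteq> Lw u"
  proof -
    have v: "srep u \<in> Dirs" using SC_srep assms by auto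
    have "prec (srep (semb x)) (srep u) \<longleftrightarrow> prec {x} (srep u)"
      unfolding semb_cl prec_def using srep_cl[OF single_Dirs, of x] by simp
    moreover have "prec (srep (semb x)) (srep u) \<longleftrightarrow> srep (semb x) \<subseteq> Lw u"
      unfolding Lw_def semb_cl by (rule prec_iff[OF DirsD(1)[OF v]]) (simp add: srep_cl single_Dirs)
    moreover have "prec {x} (srep u) \<longleftrightarrow> {x} \<subseteq> Lw u"
      unfolding Lw_def by (rule prec_iff[OF DirsD(1)[OF v] single_Dirs])
    ultimately show ?thesis by simp
  qed
  finally show ?thesis by simp
qed

lemma Lw_mono:
  assumes "u \<in> SC" "v \<in> SC" "sle u v" shows "Lw u \<subseteq> Lw v"
proof -
  have u: "srep u \<in> Dirs" "u = cl (srep u)" and v: "srep v \<in> Dirs" "v = cl (srep v)"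
    using SC_srep assms(1,2) by auto
  have "sle (cl (srep u)) (cl (srep v))"
    using assms(3) by (simp only: u(2)[symmetric] v(2)[symmetric])
  then have "prec (srep u) (srep v)" using sle_cl[OF u(1) v(1)] by simp
  then show ?thesis unfolding Lw_def by (rule low_mono[OF DirsD(1)[OF u(1)] DirsD(1)[OF v(1)]])
qed



definition netF :: "'a::order set \<Rightarrow> 'a filter" where
  "netF A = (INF a\<in>A. principal {b\<in>A. a \<le> b})"

lemma eventually_netF:
  assumes "A \<in> Dirs"
  shows "eventually P (netF A) \<longleftrightarrow> (\<exists>a\<in>A. \<forall>b\<in>A. a \<le> b \<longrightarrow> P b)"
proof -
  have "eventually P (netF A) \<longleftrightarrow> (\<exists>a\<in>A. eventually P (principal {b\<in>A. a \<le> b}))"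
    unfolding netF_def
  proof (rule eventually_INF_base)
    show "A \<noteq> {}" using DirsD(1)[OF assms] .
    fix a b assume "a \<in> A" "b \<in> A"
    then obtain c where "c \<in> A" "a \<le> c" "b \<le> c" using DirsD(2)[OF assms] by blast
    then show "\<exists>x\<in>A. principal {b \<in> A. x \<le> b} \<le> inf (principal {ba \<in> A. a \<le> ba}) (principal {ba \<in> A. b \<le> ba})"
      by (intro bexI[of _ c]) (auto intro: order_trans)
  qed
  then show ?thesis by (simp add: eventually_principal, blast)
qed

lemma netF_ne: "A \<in> Dirs \<Longrightarrow> netF A \<noteq> bot"
  using eventually_netF[of A "\<lambda>_. False"] by (auto simp: eventually_False[symmetric])

lemma conv_netF:
  fixes A :: "'a::dc_riesz_space set"
  assumes A: "A \<in> Dirs" and bdd: "bdd_above A"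
  shows "ord_conv (netF A) (Sup A)"
  unfolding ord_conv_def
proof (intro exI[of _ "(\<lambda>a. Sup A - a) ` A"] conjI)
  have ne: "A \<noteq> {}" using DirsD(1)[OF A] .
  have ub: "a \<le> Sup A" if "a \<in> A" for a using cSup_upper[OF that bdd] .
  show "(\<lambda>a. Sup A - a) ` A \<noteq> {}" using ne by simp
  show "downdir ((\<lambda>a. Sup A - a) ` A)" unfolding downdir_def
  proof (intro ballI)
    fix x y assume "x \<in> (\<lambda>a. Sup A - a) ` A" "y \<in> (\<lambda>a. Sup A - a) ` A"
    then obtain a b where ab: "a \<in> A" "b \<in> A" "x = Sup A - a" "y = Sup A - b" by auto
    then obtain c where "c \<in> A" "a \<le> c" "b \<le> c" using DirsD(2)[OF A] by blast
    then show "\<exists>z\<in>(\<lambda>a. Sup A - a) ` A. z \<le> x \<and> z \<le> y"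
      using ab by (intro bexI[of _ "Sup A - c"]) (auto simp: diff_left_mono)
  qed
  show "is_glb ((\<lambda>a. Sup A - a) ` A) 0" unfolding is_glb_def
  proof (intro conjI allI impI ballI)
    fix d assume "d \<in> (\<lambda>a. Sup A - a) ` A"
    then show "0 \<le> d" using ub by auto
  next
    fix l assume h: "\<forall>d\<in>(\<lambda>a. Sup A - a) ` A. l \<le> d"
    have "a \<le> Sup A - l" if "a \<in> A" for a using h that by (auto simp: le_diff_eq add.commute)
    then have "Sup A \<le> Sup A - l" using ne by (intro cSup_least) auto
    then show "l \<le> 0" by (simp add: le_diff_eq)
  qed
  show "\<forall>d\<in>(\<lambda>a. Sup A - a) ` A. eventually (\<lambda>y. sup (y - Sup A) (Sup A - y) \<le> d) (netF A)"
  proof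
    fix d assume "d \<in> (\<lambda>a. Sup A - a) ` A"
    then obtain a where a: "a \<in> A" "d = Sup A - a" by auto
    have "sup (b - Sup A) (Sup A - b) \<le> d" if "b \<in> A" "a \<le> b" for b
    proof (rule sup_least)
      have "b - Sup A \<le> 0" using ub[OF that(1)] by simp
      also have "0 \<le> Sup A - a" using ub[OF a(1)] by simp
      finally show "b - Sup A \<le> d" using a by simp
      show "Sup A - b \<le> d" using a that by (simp add: diff_left_mono)
    qed
    then show "eventually (\<lambda>y. sup (y - Sup A) (Sup A - y) \<le> d) (netF A)"
      unfolding eventually_netF[OF A] using a by blast
  qed
qed

lemma lub_from_conv:
  fixes f :: "'a::dc_riesz_space \<Rightarrow> 'b::dc_riesz_space"
  assumes A: "A \<in> Dirs" and c: "ord_conv (filtermap f (netF A)) y"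
    and w: "\<forall>a\<in>A. f a \<le> w"
  shows "y \<le> w"
proof -
  obtain D where D: "D \<noteq> {}" "is_glb D 0" "\<forall>d\<in>D. eventually (\<lambda>z. sup (z - y) (y - z) \<le> d) (filtermap f (netF A))"
    using c unfolding ord_conv_def by blast
  have "y - w \<le> d" if d: "d \<in> D" for d
  proof -
    have "\<exists>a\<in>A. \<forall>b\<in>A. a \<le> b \<longrightarrow> sup (f b - y) (y - f b) \<le> d"
      using D(3) d unfolding eventually_filtermap eventually_netF[OF A] by blast
    then obtain a where "a \<in> A" "sup (f a - y) (y - f a) \<le> d" by blast
    then have "y - f a \<le> d" "f a \<le> w" using w by (auto simp: le_sup_iff)
    then show ?thesis by (meson diff_left_mono order_trans)
  qed
  then have "y - w \<le> 0" using D(2) unfolding is_glb_def by blast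
  then show ?thesis by simp
qed

lemma oc_Sup:
  fixes f :: "'a::dc_riesz_space \<Rightarrow> 'b::dc_riesz_space"
  assumes A: "A \<in> Dirs" and bdd: "bdd_above A"
    and ub: "\<forall>a\<in>A. f a \<le> f (Sup A)"
    and c: "ord_conv (filtermap f (netF A)) (f (Sup A))"
  shows "f (Sup A) = Sup (f ` A)"
proof (rule sym, rule cSup_eq_non_empty)
  show "f ` A \<noteq> {}" using DirsD(1)[OF A] by simp
  show "\<And>x. x \<in> f ` A \<Longrightarrow> x \<le> f (Sup A)" using ub by auto
  show "\<And>y. (\<And>x. x \<in> f ` A \<Longrightarrow> x \<le> y) \<Longrightarrow> f (Sup A) \<le> y"
    using lub_from_conv[OF A c] by blast
qed

lemma oc_mono_Sup:
  fixes f :: "'a::dc_riesz_space \<Rightarrow> 'b::dc_riesz_space"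
  assumes "mono f" "order_continuous f" "A \<in> Dirs" "bdd_above A"
  shows "f (Sup A) = Sup (f ` A)"
proof (rule oc_Sup[OF assms(3,4)])
  show "\<forall>a\<in>A. f a \<le> f (Sup A)" using assms(1,4) by (auto intro: monoD cSup_upper)
  show "ord_conv (filtermap f (netF A)) (f (Sup A))"
    using assms(2) netF_ne[OF assms(3)] conv_netF[OF assms(3,4)] unfolding order_continuous_def by blast
qed

lemma ocpos_Sup:
  fixes f :: "'a::dc_riesz_space \<Rightarrow> 'b::dc_riesz_space"
  assumes "mono_on {x. 0 \<le> x} f" "order_continuous_pos f" "A \<in> Dirs" "bdd_above A"
    and pos: "\<forall>a\<in>A. 0 \<le> a"
  shows "f (Sup A) = Sup (f ` A)"
proof (rule oc_Sup[OF assms(3,4)])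
  obtain a0 where a0: "a0 \<in> A" using DirsD(1)[OF assms(3)] by blast
  have sp: "0 \<le> Sup A" using pos a0 cSup_upper[OF a0 assms(4)] by (meson order_trans)
  show "\<forall>a\<in>A. f a \<le> f (Sup A)" using assms(1,4) pos sp
    by (auto intro: mono_onD cSup_upper)
  have ev: "eventually (\<lambda>y. 0 \<le> y) (netF A)"
    unfolding eventually_netF[OF assms(3)] using a0 pos by blast
  show "ord_conv (filtermap f (netF A)) (f (Sup A))"
    using assms(2) netF_ne[OF assms(3)] conv_netF[OF assms(3,4)] ev sp unfolding order_continuous_pos_def by blast
qed



lemma sle_cl_iff:
  assumes "A \<in> Dirs" "w \<in> SC"
  shows "sle (cl A) w \<longleftrightarrow> A \<subseteq> Lw w"
proof -
  have w: "srep w \<in> Dirs" "w = cl (srep w)" using SC_srep assms(2) by auto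
  have "sle (cl A) w \<longleftrightarrow> sle (cl A) (cl (srep w))" by (simp only: w(2)[symmetric])
  also have "\<dots> \<longleftrightarrow> prec A (srep w)" by (rule sle_cl[OF assms(1) w(1)])
  also have "\<dots> \<longleftrightarrow> A \<subseteq> Lw w" unfolding Lw_def by (rule prec_iff[OF DirsD(1)[OF w(1)] assms(1)])
  finally show ?thesis .
qed

lemma Lw_ne: "u \<in> SC \<Longrightarrow> srep u \<subseteq> Lw u"
  unfolding Lw_def using mem_low by blast

lemma Lw_sup: "u \<in> SC \<Longrightarrow> x \<in> Lw u \<Longrightarrow> y \<in> Lw u \<Longrightarrow> sup x y \<in> Lw u"
  unfolding Lw_def using low_sup SC_srep DirsD(1) by metis

lemma Lw_down: "u \<in> SC \<Longrightarrow> x \<in> Lw u \<Longrightarrow> y \<le> x \<Longrightarrow> y \<in> Lw u"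
  unfolding Lw_def using low_down SC_srep DirsD(1) by metis

lemma slub_Dirs: "A \<in> Dirs \<Longrightarrow> is_slub (semb ` A) (cl A)"
  unfolding is_slub_def
proof (intro conjI ballI impI)
  assume A: "A \<in> Dirs"
  show "cl A \<in> SC" by (rule cl_in_SC[OF A])
  fix v assume "v \<in> semb ` A"
  then obtain a where a: "a \<in> A" "v = semb a" by auto
  show "sle v (cl A)" unfolding a(2) using sle_semb_iff[OF cl_in_SC[OF A]] Lw_cl[OF A] mem_low[OF a(1)] by simp
next
  fix w assume A: "A \<in> Dirs" and w: "w \<in> SC" and h: "\<forall>v\<in>semb ` A. sle v w"
  have "A \<subseteq> Lw w" using h sle_semb_iff[OF w] by auto
  then show "sle (cl A) w" using sle_cl_iff[OF A w] by simp
qed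

definition ssum :: "'a::dc_riesz_space set \<Rightarrow> 'a set \<Rightarrow> 'a set" where
  "ssum A B = {a + b | a b. a \<in> A \<and> b \<in> B}"

lemma sadd_eq: "sadd u v = cl (ssum (srep u) (srep v))"
  unfolding sadd_def cl_def ssum_def ..

lemma ssmul_eq: "ssmul t u = cl ((\<lambda>a. t *\<^sub>R a) ` srep u)"
  unfolding ssmul_def cl_def ..

lemma ssum_Dirs: "A \<in> Dirs \<Longrightarrow> B \<in> Dirs \<Longrightarrow> ssum A B \<in> Dirs"
proof (rule DirsI)
  assume A: "A \<in> Dirs" and B: "B \<in> Dirs"
  show "ssum A B \<noteq> {}" using DirsD(1)[OF A] DirsD(1)[OF B] unfolding ssum_def by blast
  fix x y assume "x \<in> ssum A B" "y \<in> ssum A B"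
  then obtain a b a' b' where h: "a \<in> A" "b \<in> B" "a' \<in> A" "b' \<in> B" "x = a + b" "y = a' + b'"
    unfolding ssum_def by blast
  obtain c where c: "c \<in> A" "a \<le> c" "a' \<le> c" using DirsD(2)[OF A h(1,3)] by blast
  obtain d where d: "d \<in> B" "b \<le> d" "b' \<le> d" using DirsD(2)[OF B h(2,4)] by blast
  show "\<exists>z\<in>ssum A B. x \<le> z \<and> y \<le> z"
    using c d h unfolding ssum_def by (intro bexI[of _ "c + d"]) (auto intro: add_mono)
qed

lemma ssum_prec:
  assumes A: "A \<in> Dirs" and B: "B \<in> Dirs" and A': "A' \<in> Dirs" and B': "B' \<in> Dirs"
    and p1: "prec A A'" and p2: "prec B B'"
  shows "prec (ssum A B) (ssum A' B')"
proof -
  have ne: "ssum A' B' \<noteq> {}" using DirsD(1)[OF ssum_Dirs[OF A' B']] .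
  have "ssum A B \<subseteq> low (ssum A' B')"
  proof
    fix x assume "x \<in> ssum A B"
    then obtain a b where ab: "a \<in> A" "b \<in> B" "x = a + b" unfolding ssum_def by blast
    have la: "scut A' a = a" using prec_iff[OF DirsD(1)[OF A'] A] p1 ab(1) unfolding low_def by auto
    have lb: "scut B' b = b" using prec_iff[OF DirsD(1)[OF B'] B] p2 ab(2) unfolding low_def by auto
    define T where "T = scut (ssum A' B') (a + b)"
    have key: "inf a a' + inf b b' \<le> T" if "a' \<in> A'" "b' \<in> B'" for a' b'
    proof -
      have "inf a a' + inf b b' \<le> inf (a + b) (a' + b')"
        by (intro le_infI add_mono) simp_all
      also have "\<dots> \<le> T" unfolding T_def
        by (rule scut_ge) (use that in \<open>auto simp: ssum_def\<close>)
      finally show ?thesis .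
    qed
    have "b \<le> T - a"
    proof -
      have "inf b b' \<le> T - a" if b': "b' \<in> B'" for b'
      proof -
        have "inf a a' \<le> T - inf b b'" if "a' \<in> A'" for a'
          using key[OF that b'] by (simp add: le_diff_eq)
        then have "scut A' a \<le> T - inf b b'" unfolding scut_def
          using DirsD(1)[OF A'] by (intro cSUP_least) auto
        then show ?thesis using la by (simp add: le_diff_eq add.commute)
      qed
      then have "scut B' b \<le> T - a" unfolding scut_def
        using DirsD(1)[OF B'] by (intro cSUP_least) auto
      then show ?thesis using lb by simp
    qed
    then have "x \<le> T" using ab by (simp add: le_diff_eq add.commute)
    then show "x \<in> low (ssum A' B')" unfolding T_def ab(3) by (rule low_I[OF ne])
  qed
  then show ?thesis using prec_iff[OF ne ssum_Dirs[OF A B]] by simp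
qed

lemma ssum_cong:
  assumes "A \<in> Dirs" "B \<in> Dirs" "A' \<in> Dirs" "B' \<in> Dirs" "scut A = scut A'" "scut B = scut B'"
  shows "scut (ssum A B) = scut (ssum A' B')"
  using assms ssum_prec scut_eq_iff by metis

lemma scale_Dirs:
  assumes "A \<in> Dirs" "0 \<le> t" shows "(\<lambda>a. t *\<^sub>R a) ` A \<in> Dirs"
proof (rule DirsI)
  show "(\<lambda>a. t *\<^sub>R a) ` A \<noteq> {}" using DirsD(1)[OF assms(1)] by simp
  fix x y assume "x \<in> (\<lambda>a. t *\<^sub>R a) ` A" "y \<in> (\<lambda>a. t *\<^sub>R a) ` A"
  then obtain a b where ab: "a \<in> A" "b \<in> A" "x = t *\<^sub>R a" "y = t *\<^sub>R b" by auto
  obtain c where "c \<in> A" "a \<le> c" "b \<le> c" using DirsD(2)[OF assms(1) ab(1,2)] by blast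
  then show "\<exists>z\<in>(\<lambda>a. t *\<^sub>R a) ` A. x \<le> z \<and> y \<le> z"
    using ab assms(2) by (intro bexI[of _ "t *\<^sub>R c"]) (auto intro: scaleR_left_mono)
qed

lemma scale_prec:
  assumes A: "A \<in> Dirs" and B: "B \<in> Dirs" and t: "0 \<le> t" and p: "prec A B"
  shows "prec ((\<lambda>a. t *\<^sub>R a) ` A) ((\<lambda>a. t *\<^sub>R a) ` B)"
proof (cases "t = 0")
  case True
  then have "(\<lambda>a. t *\<^sub>R a) ` A = {0}" "(\<lambda>a. t *\<^sub>R a) ` B = {0}"
    using DirsD(1)[OF A] DirsD(1)[OF B] by auto
  then show ?thesis by (simp add: prec_refl)
next
  case False
  then have tp: "0 < t" using t by simp
  have ne: "(\<lambda>a. t *\<^sub>R a) ` B \<noteq> {}" using DirsD(1)[OF B] by simp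
  have "(\<lambda>a. t *\<^sub>R a) ` A \<subseteq> low ((\<lambda>a. t *\<^sub>R a) ` B)"
  proof
    fix x assume "x \<in> (\<lambda>a. t *\<^sub>R a) ` A"
    then obtain a where a: "a \<in> A" "x = t *\<^sub>R a" by auto
    have la: "scut B a = a" using prec_iff[OF DirsD(1)[OF B] A] p a(1) unfolding low_def by auto
    define T where "T = scut ((\<lambda>a. t *\<^sub>R a) ` B) x"
    have "inf a b \<le> T /\<^sub>R t" if b: "b \<in> B" for b
    proof -
      have "t *\<^sub>R inf a b \<le> inf x (t *\<^sub>R b)" unfolding a(2)
        by (intro le_infI scaleR_left_mono) (use t in auto)
      also have "\<dots> \<le> T" unfolding T_def by (rule scut_ge) (use b in auto)
      finally show ?thesis using tp by (simp add: pos_le_divideR_eq)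
    qed
    then have "scut B a \<le> T /\<^sub>R t" unfolding scut_def using DirsD(1)[OF B] by (intro cSUP_least) auto
    then have "x \<le> T" using la tp a(2) by (simp add: pos_le_divideR_eq)
    then show "x \<in> low ((\<lambda>a. t *\<^sub>R a) ` B)" unfolding T_def by (rule low_I[OF ne])
  qed
  then show ?thesis using prec_iff[OF ne scale_Dirs[OF A t]] by simp
qed

lemma scale_cong:
  assumes "A \<in> Dirs" "B \<in> Dirs" "0 \<le> t" "scut A = scut B"
  shows "scut ((\<lambda>a. t *\<^sub>R a) ` A) = scut ((\<lambda>a. t *\<^sub>R a) ` B)"
  using assms scale_prec scut_eq_iff by metis

inductive_set supcl :: "'a::dc_riesz_space set \<Rightarrow> 'a set" for A where
  base: "a \<in> A \<Longrightarrow> a \<in> supcl A"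
| join: "x \<in> supcl A \<Longrightarrow> y \<in> supcl A \<Longrightarrow> sup x y \<in> supcl A"

lemma supcl_sub:
  assumes "\<And>x y. x \<in> Z \<Longrightarrow> y \<in> Z \<Longrightarrow> sup x y \<in> Z" "A \<subseteq> Z" shows "supcl A \<subseteq> Z"
proof
  fix x assume "x \<in> supcl A"
  then show "x \<in> Z" by induct (use assms in auto)
qed

lemma supcl_ub:
  assumes "x \<in> supcl A" "\<And>a. a \<in> A \<Longrightarrow> a \<le> z" shows "x \<le> z"
  using assms by induct auto

lemma supcl_Dirs: "A \<noteq> {} \<Longrightarrow> supcl A \<in> Dirs"
proof (rule DirsI)
  assume "A \<noteq> {}" then show "supcl A \<noteq> {}" using supcl.base by blast
  fix a b assume "a \<in> supcl A" "b \<in> supcl A"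
  then show "\<exists>c\<in>supcl A. a \<le> c \<and> b \<le> c" by (intro bexI[of _ "sup a b"]) (auto intro: supcl.join)
qed

lemma slub_supcl:
  assumes "A \<noteq> {}" shows "is_slub (semb ` A) (cl (supcl A))"
  unfolding is_slub_def
proof (intro conjI ballI impI)
  have D: "supcl A \<in> Dirs" by (rule supcl_Dirs[OF assms])
  show "cl (supcl A) \<in> SC" by (rule cl_in_SC[OF D])
  fix v assume "v \<in> semb ` A"
  then obtain a where a: "a \<in> A" "v = semb a" by auto
  show "sle v (cl (supcl A))" unfolding a(2)
    using sle_semb_iff[OF cl_in_SC[OF D]] Lw_cl[OF D] mem_low[OF supcl.base[OF a(1)]] by simp
next
  fix w assume w: "w \<in> SC" and h: "\<forall>v\<in>semb ` A. sle v w"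
  have D: "supcl A \<in> Dirs" by (rule supcl_Dirs[OF assms])
  have "A \<subseteq> Lw w" using h sle_semb_iff[OF w] by auto
  then have "supcl A \<subseteq> Lw w" using Lw_sup[OF w] supcl_sub by metis
  then show "sle (cl (supcl A)) w" using sle_cl_iff[OF D w] by simp
qed



locale sext =
  fixes P :: "'a::dc_riesz_space set" and Q :: "'b::dc_riesz_space set" and f :: "'a \<Rightarrow> 'b"
  assumes P_up: "x \<in> P \<Longrightarrow> x \<le> y \<Longrightarrow> y \<in> P"
    and P_inf: "x \<in> P \<Longrightarrow> y \<in> P \<Longrightarrow> inf x y \<in> P"
    and Q_up: "x' \<in> Q \<Longrightarrow> x' \<le> y' \<Longrightarrow> y' \<in> Q"
    and fPQ: "x \<in> P \<Longrightarrow> f x \<in> Q"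
    and f_mono: "x \<in> P \<Longrightarrow> y \<in> P \<Longrightarrow> x \<le> y \<Longrightarrow> f x \<le> f y"
    and f_oc: "A \<subseteq> P \<Longrightarrow> A \<in> Dirs \<Longrightarrow> bdd_above A \<Longrightarrow> f (Sup A) = Sup (f ` A)"
begin

definition "S = {u \<in> SC. Lw u \<inter> P \<noteq> {}}"
definition "S' = {v \<in> SC. Lw v \<inter> Q \<noteq> {}}"
definition "R u = Lw u \<inter> P"
definition "G u = cl (f ` R u)"

lemma P_sup: "x \<in> P \<Longrightarrow> sup x y \<in> P"
  using P_up by (meson sup_ge1)

lemma R_Dirs: "u \<in> S \<Longrightarrow> R u \<in> Dirs"
proof (rule DirsI)
  assume u: "u \<in> S"
  then show "R u \<noteq> {}" unfolding S_def R_def by auto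
  fix a b assume "a \<in> R u" "b \<in> R u"
  then show "\<exists>c\<in>R u. a \<le> c \<and> b \<le> c" using u unfolding R_def S_def
    by (intro bexI[of _ "sup a b"]) (auto intro: Lw_sup P_sup)
qed

lemma R_sub: "R u \<subseteq> P" unfolding R_def by auto

lemma R_scut: assumes u: "u \<in> S" shows "scut (R u) = scut (srep u)"
proof -
  have uS: "u \<in> SC" and sd: "srep u \<in> Dirs" using u SC_srep unfolding S_def by auto
  have "prec (R u) (srep u)"
    using prec_iff[OF DirsD(1)[OF sd] R_Dirs[OF u]] unfolding R_def Lw_def by auto
  moreover have "srep u \<subseteq> low (R u)"
  proof
    fix a assume a: "a \<in> srep u"
    obtain p where p: "p \<in> R u" using R_Dirs[OF u] DirsD(1) by blast
    have "sup a p \<in> R u" using p Lw_ne[OF uS] a Lw_sup[OF uS] P_up unfolding R_def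
      by (auto intro: P_sup[of p a, unfolded sup_commute[of p a]])
    then have "sup a p \<in> low (R u)" by (rule mem_low)
    then show "a \<in> low (R u)" using low_down[OF DirsD(1)[OF R_Dirs[OF u]]] by (meson sup_ge1)
  qed
  then have "prec (srep u) (R u)" using prec_iff[OF DirsD(1)[OF R_Dirs[OF u]] sd] by simp
  ultimately show ?thesis using scut_eq_iff by blast
qed

lemma R_cl: assumes u: "u \<in> S" shows "cl (R u) = u"
proof -
  have "srep u \<in> Dirs" "u = cl (srep u)" using u SC_srep unfolding S_def by auto
  then show ?thesis using cl_eq_iff[OF R_Dirs[OF u]] R_scut[OF u] by metis
qed

lemma S_SC: "u \<in> S \<Longrightarrow> u \<in> SC" unfolding S_def by simp

lemma img_Dirs: assumes "A \<in> Dirs" "A \<subseteq> P" shows "f ` A \<in> Dirs"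
proof (rule DirsI)
  show "f ` A \<noteq> {}" using DirsD(1)[OF assms(1)] by simp
  fix x y assume "x \<in> f ` A" "y \<in> f ` A"
  then obtain a b where ab: "a \<in> A" "b \<in> A" "x = f a" "y = f b" by auto
  obtain c where "c \<in> A" "a \<le> c" "b \<le> c" using DirsD(2)[OF assms(1) ab(1,2)] by blast
  then show "\<exists>z\<in>f ` A. x \<le> z \<and> y \<le> z" using ab assms(2)
    by (intro bexI[of _ "f c"]) (auto intro: f_mono)
qed

lemma Ext:
  assumes A: "A \<in> Dirs" "A \<subseteq> P" and B: "B \<in> Dirs" "B \<subseteq> P" and p: "prec A B"
  shows "prec (f ` A) (f ` B)"
proof -
  have fB: "f ` B \<in> Dirs" by (rule img_Dirs[OF B])
  have neB: "f ` B \<noteq> {}" using DirsD(1)[OF fB] .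
  have "f ` A \<subseteq> low (f ` B)"
  proof
    fix y assume "y \<in> f ` A"
    then obtain a where a: "a \<in> A" "y = f a" by auto
    have aP: "a \<in> P" using a A by auto
    have "a \<in> low B" using prec_iff[OF DirsD(1)[OF B(1)] A(1)] p a(1) by auto
    then have sa: "Sup ((\<lambda>b. inf a b) ` B) = a" unfolding low_def scut_def by simp
    let ?C = "(\<lambda>b. inf a b) ` B"
    have CP: "?C \<subseteq> P" using B(2) aP P_inf by auto
    have CD: "?C \<in> Dirs"
    proof (rule DirsI)
      show "?C \<noteq> {}" using DirsD(1)[OF B(1)] by simp
      fix x y assume "x \<in> ?C" "y \<in> ?C"
      then obtain b b' where bb: "b \<in> B" "b' \<in> B" "x = inf a b" "y = inf a b'" by auto
      obtain c where "c \<in> B" "b \<le> c" "b' \<le> c" using DirsD(2)[OF B(1) bb(1,2)] by blast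
      then have "x \<le> inf a c" "y \<le> inf a c" "inf a c \<in> ?C" using bb by (auto intro: le_infI2)
      then show "\<exists>z\<in>?C. x \<le> z \<and> y \<le> z" by blast
    qed
    have fa: "f a = Sup (f ` ?C)" using f_oc[OF CP CD bdd_scut] sa by simp
    have "f ` ?C \<subseteq> low (f ` B)"
    proof
      fix z assume "z \<in> f ` ?C"
      then obtain b where b: "b \<in> B" "z = f (inf a b)" by auto
      have "f (inf a b) \<le> f b" using b B(2) aP P_inf by (intro f_mono) auto
      moreover have "f b \<in> low (f ` B)" using b by (intro mem_low) simp
      ultimately show "z \<in> low (f ` B)" using b low_down[OF neB] by blast
    qed
    moreover have "bdd_above (f ` ?C)"
    proof (rule bdd_aboveI[of _ "f a"])
      fix z assume "z \<in> f ` ?C"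
      then obtain b where b: "b \<in> B" "z = f (inf a b)" by auto
      then have "inf a b \<in> P" using B(2) aP P_inf by auto
      then show "z \<le> f a" using b aP f_mono by simp
    qed
    ultimately have "Sup (f ` ?C) \<in> low (f ` B)"
      using DirsD(1)[OF B(1)] by (intro low_Sup[OF neB]) auto
    then show "y \<in> low (f ` B)" using fa a by simp
  qed
  then show ?thesis using prec_iff[OF neB img_Dirs[OF A]] by simp
qed

lemma cl_in_S: assumes "A \<in> Dirs" "A \<subseteq> P" shows "cl A \<in> S"
proof -
  have "A \<subseteq> Lw (cl A)" using Lw_cl[OF assms(1)] mem_low by blast
  then show ?thesis using assms DirsD(1)[OF assms(1)] cl_in_SC[OF assms(1)] unfolding S_def by blast
qed

lemma G_cl: assumes A: "A \<in> Dirs" "A \<subseteq> P" shows "G (cl A) = cl (f ` A)"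
proof -
  have cS: "cl A \<in> S" by (rule cl_in_S[OF A])
  have e: "scut (R (cl A)) = scut A" using R_scut[OF cS] srep_cl[OF A(1)] by simp
  have RD: "R (cl A) \<in> Dirs" "R (cl A) \<subseteq> P" using R_Dirs[OF cS] R_sub by auto
  have "prec (f ` R (cl A)) (f ` A)" "prec (f ` A) (f ` R (cl A))"
    using Ext[OF RD A] Ext[OF A RD] e scut_eq_iff by metis+
  then have "scut (f ` R (cl A)) = scut (f ` A)" using scut_eq_iff by blast
  then show ?thesis unfolding G_def using cl_eq_iff[OF img_Dirs[OF RD] img_Dirs[OF A]] by simp
qed

lemma G_S': assumes u: "u \<in> S" shows "G u \<in> S'"
proof -
  have D: "f ` R u \<in> Dirs" by (rule img_Dirs[OF R_Dirs[OF u] R_sub])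
  have "f ` R u \<subseteq> Lw (G u)" unfolding G_def Lw_cl[OF D] using mem_low by blast
  moreover have "f ` R u \<subseteq> Q" using R_sub fPQ by auto
  ultimately show ?thesis unfolding S'_def G_def using cl_in_SC[OF D] DirsD(1)[OF D] by (auto simp: G_def)
qed

lemma G_semb: "x \<in> P \<Longrightarrow> G (semb x) = semb (f x)"
  unfolding semb_cl using G_cl[OF single_Dirs, of x] by simp

lemma G_mono: assumes u: "u \<in> S" and v: "v \<in> S" and le: "sle u v" shows "sle (G u) (G v)"
proof -
  have Ru: "R u \<in> Dirs" "R u \<subseteq> P" and Rv: "R v \<in> Dirs" "R v \<subseteq> P" using R_Dirs u v R_sub by auto
  have "sle (cl (R u)) (cl (R v))" using le R_cl[OF u] R_cl[OF v] by simp
  then have "prec (R u) (R v)" using sle_cl[OF Ru(1) Rv(1)] by simp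
  then have "prec (f ` R u) (f ` R v)" by (rule Ext[OF Ru Rv])
  then show ?thesis unfolding G_def using sle_cl[OF img_Dirs[OF Ru] img_Dirs[OF Rv]] by simp
qed

lemma R_mono: "u \<in> S \<Longrightarrow> v \<in> S \<Longrightarrow> sle u v \<Longrightarrow> R u \<subseteq> R v"
  unfolding R_def using Lw_mono S_SC by blast

lemma G_loc: "left_oc S G"
  unfolding left_oc_def
proof (intro allI impI)
  fix D u assume DS: "D \<subseteq> S" and Dne: "D \<noteq> {}" and sd: "sdir D" and u: "u \<in> S" and sl: "is_slub D u"
  define W where "W = \<Union> (R ` D)"
  have WP: "W \<subseteq> P" unfolding W_def using R_sub by auto
  have WD: "W \<in> Dirs"
  proof (rule DirsI)
    obtain v0 where v0: "v0 \<in> D" using Dne by blast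
    then have "R v0 \<noteq> {}" using DS R_Dirs DirsD(1) by blast
    then show "W \<noteq> {}" unfolding W_def using v0 by blast
    fix a b assume "a \<in> W" "b \<in> W"
    then obtain v1 v2 where v: "v1 \<in> D" "v2 \<in> D" "a \<in> R v1" "b \<in> R v2" unfolding W_def by auto
    obtain w where w: "w \<in> D" "sle v1 w" "sle v2 w" using sd v(1,2) unfolding sdir_def by blast
    have wS: "w \<in> S" "v1 \<in> S" "v2 \<in> S" using w(1) v(1,2) DS by (meson subsetD)+
    have "a \<in> R w" "b \<in> R w" using R_mono[OF wS(2,1) w(2)] R_mono[OF wS(3,1) w(3)] v(3,4) by auto
    then have "sup a b \<in> Lw w" "sup a b \<in> P" using Lw_sup[OF S_SC[OF wS(1)]] P_sup unfolding R_def by auto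
    then have "sup a b \<in> R w" unfolding R_def by simp
    then show "\<exists>c\<in>W. a \<le> c \<and> b \<le> c" using w(1) unfolding W_def by (intro bexI[of _ "sup a b"]) auto
  qed
  have slW: "is_slub D (cl W)" unfolding is_slub_def
  proof (intro conjI ballI impI)
    show "cl W \<in> SC" by (rule cl_in_SC[OF WD])
    fix v assume v: "v \<in> D"
    have vS: "v \<in> S" using v DS by blast
    have "R v \<subseteq> W" unfolding W_def using v by blast
    also have "W \<subseteq> low W" using mem_low by blast
    finally have "R v \<subseteq> low W" .
    then have "prec (R v) W" using prec_iff[OF DirsD(1)[OF WD] R_Dirs[OF vS]] by blast
    then have "sle (cl (R v)) (cl W)" using sle_cl[OF R_Dirs[OF vS] WD] by simp
    then show "sle v (cl W)" using R_cl[OF vS] by simp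
  next
    fix w assume w: "w \<in> SC" and h: "\<forall>v\<in>D. sle v w"
    have "W \<subseteq> Lw w"
    proof
      fix x assume "x \<in> W"
      then obtain v where v: "v \<in> D" "x \<in> R v" unfolding W_def by auto
      have vS: "v \<in> SC" using v DS S_SC by blast
      have "Lw v \<subseteq> Lw w" using Lw_mono[OF vS w] h v by blast
      then show "x \<in> Lw w" using v unfolding R_def by auto
    qed
    then show "sle (cl W) w" using sle_cl_iff[OF WD w] by simp
  qed
  have uW: "u = cl W" using slub_unique[OF sl slW] .
  have fWD: "f ` W \<in> Dirs" by (rule img_Dirs[OF WD WP])
  have Gu: "G u = cl (f ` W)" using G_cl[OF WD WP] uW by simp
  show "is_slub (G ` D) (G u)" unfolding Gu is_slub_def
  proof (intro conjI ballI impI)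
    show "cl (f ` W) \<in> SC" by (rule cl_in_SC[OF fWD])
    fix v' assume "v' \<in> G ` D"
    then obtain v where v: "v \<in> D" "v' = G v" by auto
    have RvD: "f ` R v \<in> Dirs" using img_Dirs[OF R_Dirs R_sub] v DS by (meson subsetD)
    have "R v \<subseteq> W" unfolding W_def using v by blast
    then have "f ` R v \<subseteq> f ` W" by (rule image_mono)
    also have "f ` W \<subseteq> low (f ` W)" using mem_low by blast
    finally have "f ` R v \<subseteq> low (f ` W)" .
    then have "prec (f ` R v) (f ` W)" using prec_iff[OF DirsD(1)[OF fWD] RvD] by blast
    then show "sle v' (cl (f ` W))" unfolding v(2) G_def using sle_cl[OF RvD fWD] by simp
  next
    fix w assume w: "w \<in> SC" and h: "\<forall>v\<in>G ` D. sle v w"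
    have "f ` W \<subseteq> Lw w"
    proof
      fix y assume "y \<in> f ` W"
      then obtain v x where v: "v \<in> D" "x \<in> R v" "y = f x" unfolding W_def by auto
      have RvD: "f ` R v \<in> Dirs" using img_Dirs[OF R_Dirs R_sub] v DS by (meson subsetD)
      have "sle (G v) w" using h v by auto
      then have "f ` R v \<subseteq> Lw w" unfolding G_def using sle_cl_iff[OF RvD w] by simp
      then show "y \<in> Lw w" using v by auto
    qed
    then show "sle (cl (f ` W)) w" using sle_cl_iff[OF fWD w] by simp
  qed
qed

lemma G_unique:
  assumes h1: "\<And>x. x \<in> P \<Longrightarrow> h (semb x) = semb (f x)" and h2: "left_oc S h" and u: "u \<in> S"
  shows "h u = G u"
proof -
  define D where "D = semb ` R u"
  have RD: "R u \<in> Dirs" using R_Dirs[OF u] .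
  have DS: "D \<subseteq> S" unfolding D_def semb_cl using R_sub single_Dirs cl_in_S by blast
  have Dne: "D \<noteq> {}" unfolding D_def using DirsD(1)[OF RD] by simp
  have sd: "sdir D" unfolding sdir_def D_def
  proof (intro ballI)
    fix v1 v2 assume "v1 \<in> semb ` R u" "v2 \<in> semb ` R u"
    then obtain a b where ab: "a \<in> R u" "b \<in> R u" "v1 = semb a" "v2 = semb b" by auto
    have c: "sup a b \<in> R u" using ab u unfolding R_def S_def by (auto intro: Lw_sup P_sup)
    have sc: "semb (sup a b) \<in> SC" unfolding semb_cl by (rule cl_in_SC[OF single_Dirs])
    have "a \<in> Lw (semb (sup a b))" "b \<in> Lw (semb (sup a b))"
      unfolding semb_cl Lw_cl[OF single_Dirs]
      using low_down[of "{sup a b}" "sup a b"] mem_low[of "sup a b" "{sup a b}"] by auto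
    then show "\<exists>w\<in>semb ` R u. sle v1 w \<and> sle v2 w"
      using c ab sle_semb_iff[OF sc] by blast
  qed
  have slD: "is_slub D u"
  proof -
    have "is_slub (semb ` R u) (cl (R u))" by (rule slub_Dirs[OF RD])
    then show ?thesis unfolding D_def R_cl[OF u] .
  qed
  have "is_slub (h ` D) (h u)" using h2 DS Dne sd u slD unfolding left_oc_def by blast
  moreover have "is_slub (G ` D) (G u)" using G_loc DS Dne sd u slD unfolding left_oc_def by blast
  moreover have "h ` D = G ` D" unfolding D_def image_image
    using R_sub[of u] h1 G_semb by (intro image_cong) auto
  ultimately show ?thesis using slub_unique by metis
qed

lemma G_add:
  assumes add: "\<And>x y. x \<in> P \<Longrightarrow> y \<in> P \<Longrightarrow> f (x + y) = f x + f y"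
    and Padd: "\<And>x y. x \<in> P \<Longrightarrow> y \<in> P \<Longrightarrow> x + y \<in> P"
  shows "sadditive S G"
  unfolding sadditive_def
proof (intro ballI)
  fix u v assume u: "u \<in> S" and v: "v \<in> S"
  have Ru: "R u \<in> Dirs" and Rv: "R v \<in> Dirs" using R_Dirs u v by auto
  have su: "srep u \<in> Dirs" and sv: "srep v \<in> Dirs" using SC_srep S_SC u v by auto
  have sD: "ssum (R u) (R v) \<in> Dirs" by (rule ssum_Dirs[OF Ru Rv])
  have sP: "ssum (R u) (R v) \<subseteq> P" unfolding ssum_def using R_sub Padd by blast
  have "sadd u v = cl (ssum (R u) (R v))"
    unfolding sadd_eq using cl_eq_iff[OF ssum_Dirs[OF su sv] sD] ssum_cong[OF su sv Ru Rv]
      R_scut[OF u] R_scut[OF v] by simp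
  then have "G (sadd u v) = cl (f ` ssum (R u) (R v))" using G_cl[OF sD sP] by simp
  also have "f ` ssum (R u) (R v) = ssum (f ` R u) (f ` R v)"
    unfolding ssum_def using R_sub add by (auto simp: image_iff) (metis subsetD)+
  also have "cl (ssum (f ` R u) (f ` R v)) = sadd (G u) (G v)"
  proof -
    have fu: "f ` R u \<in> Dirs" and fv: "f ` R v \<in> Dirs" using img_Dirs R_sub Ru Rv by auto
    have g: "srep (G u) \<in> Dirs" "scut (srep (G u)) = scut (f ` R u)"
      "srep (G v) \<in> Dirs" "scut (srep (G v)) = scut (f ` R v)"
      unfolding G_def using srep_cl[OF fu] srep_cl[OF fv] by auto
    show ?thesis unfolding sadd_eq
      using cl_eq_iff[OF ssum_Dirs[OF fu fv] ssum_Dirs[OF g(1) g(3)]] ssum_cong[OF fu fv g(1) g(3)] g by simp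
  qed
  finally show "G (sadd u v) = sadd (G u) (G v)" .
qed

lemma G_hom:
  assumes hom: "\<And>t x. 0 \<le> t \<Longrightarrow> x \<in> P \<Longrightarrow> f (t *\<^sub>R x) = t *\<^sub>R f x"
    and Psc: "\<And>t x. 0 \<le> t \<Longrightarrow> x \<in> P \<Longrightarrow> t *\<^sub>R x \<in> P"
  shows "sposhom S G"
  unfolding sposhom_def
proof (intro allI ballI impI)
  fix t :: real and u assume u: "u \<in> S" and t: "0 \<le> t"
  have Ru: "R u \<in> Dirs" using R_Dirs u by auto
  have su: "srep u \<in> Dirs" using SC_srep S_SC u by auto
  have sD: "(\<lambda>a. t *\<^sub>R a) ` R u \<in> Dirs" by (rule scale_Dirs[OF Ru t])
  have sP: "(\<lambda>a. t *\<^sub>R a) ` R u \<subseteq> P" using R_sub Psc t by auto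
  have "ssmul t u = cl ((\<lambda>a. t *\<^sub>R a) ` R u)"
    unfolding ssmul_eq using cl_eq_iff[OF scale_Dirs[OF su t] sD] scale_cong[OF su Ru t]
      R_scut[OF u] by simp
  then have "G (ssmul t u) = cl (f ` (\<lambda>a. t *\<^sub>R a) ` R u)" using G_cl[OF sD sP] by simp
  also have "f ` (\<lambda>a. t *\<^sub>R a) ` R u = (\<lambda>a. t *\<^sub>R a) ` f ` R u"
    unfolding image_image using R_sub hom t by (intro image_cong) auto
  also have "cl ((\<lambda>a. t *\<^sub>R a) ` f ` R u) = ssmul t (G u)"
  proof -
    have fu: "f ` R u \<in> Dirs" using img_Dirs R_sub Ru by auto
    have g: "srep (G u) \<in> Dirs" "scut (srep (G u)) = scut (f ` R u)"
      unfolding G_def using srep_cl[OF fu] by auto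
    show ?thesis unfolding ssmul_eq
      using cl_eq_iff[OF scale_Dirs[OF fu t] scale_Dirs[OF g(1) t]] scale_cong[OF fu g(1) t] g by simp
  qed
  finally show "G (ssmul t u) = ssmul t (G u)" .
qed

end



lemma sext_univ:
  fixes f :: "'a::dc_riesz_space \<Rightarrow> 'b::dc_riesz_space"
  assumes "mono f" "order_continuous f"
  shows "sext UNIV UNIV f"
proof unfold_locales
  show "\<And>x y. x \<in> UNIV \<Longrightarrow> y \<in> UNIV \<Longrightarrow> x \<le> y \<Longrightarrow> f x \<le> f y"
    using assms(1) by (simp add: monoD)
  show "\<And>A. A \<subseteq> UNIV \<Longrightarrow> A \<in> Dirs \<Longrightarrow> bdd_above A \<Longrightarrow> f (Sup A) = Sup (f ` A)"
    using oc_mono_Sup[OF assms] by blast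
qed simp_all

lemma sext_pos:
  fixes f :: "'a::dc_riesz_space \<Rightarrow> 'b::dc_riesz_space"
  assumes "\<forall>x. 0 \<le> x \<longrightarrow> 0 \<le> f x" "mono_on {x. 0 \<le> x} f" "order_continuous_pos f"
  shows "sext {x. 0 \<le> x} {x. 0 \<le> x} f"
proof unfold_locales
  show "\<And>x y. x \<in> {x::'a. 0 \<le> x} \<Longrightarrow> x \<le> y \<Longrightarrow> y \<in> {x. 0 \<le> x}" by (auto intro: order_trans)
  show "\<And>x y. x \<in> {x::'a. 0 \<le> x} \<Longrightarrow> y \<in> {x. 0 \<le> x} \<Longrightarrow> inf x y \<in> {x. 0 \<le> x}" by auto
  show "\<And>x y. x \<in> {x::'b. 0 \<le> x} \<Longrightarrow> x \<le> y \<Longrightarrow> y \<in> {x. 0 \<le> x}" by (auto intro: order_trans)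
  show "\<And>x. x \<in> {x. 0 \<le> x} \<Longrightarrow> f x \<in> {x. 0 \<le> x}" using assms(1) by auto
  show "\<And>x y. x \<in> {x. 0 \<le> x} \<Longrightarrow> y \<in> {x. 0 \<le> x} \<Longrightarrow> x \<le> y \<Longrightarrow> f x \<le> f y"
    using assms(2) by (auto intro: mono_onD)
  show "\<And>A. A \<subseteq> {x. 0 \<le> x} \<Longrightarrow> A \<in> Dirs \<Longrightarrow> bdd_above A \<Longrightarrow> f (Sup A) = Sup (f ` A)"
    using ocpos_Sup[OF assms(2,3)] by blast
qed

lemma S_univ: "{u \<in> SC. Lw u \<inter> UNIV \<noteq> {}} = SC"
proof -
  have "Lw u \<noteq> {}" if "u \<in> SC" for u
    using Lw_ne[OF that] DirsD(1) SC_srep[OF that] by blast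
  then show ?thesis by auto
qed

lemma S_pos: "{u \<in> SC. Lw u \<inter> {x. 0 \<le> x} \<noteq> {}} = SCpos"
proof -
  have "Lw u \<inter> {x. 0 \<le> x} \<noteq> {} \<longleftrightarrow> sle (semb 0) u" if u: "u \<in> SC" for u
  proof -
    have "Lw u \<inter> {x. 0 \<le> x} \<noteq> {} \<longleftrightarrow> 0 \<in> Lw u"
      using Lw_down[OF u] by auto
    then show ?thesis using sle_semb_iff[OF u] by simp
  qed
  then show ?thesis unfolding SCpos_def by auto
qed

lemma part1:
  fixes f :: "'a::dc_riesz_space \<Rightarrow> 'b::dc_riesz_space"
  assumes "mono f" "order_continuous f"
  shows "\<exists>g. is_sup_ext f g \<and> (\<forall>h. is_sup_ext f h \<longrightarrow> (\<forall>u\<in>SC. h u = g u)) \<and>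
           (additive_map f \<longrightarrow> sadditive SC g) \<and> (poshom_map f \<longrightarrow> sposhom SC g)"
proof -
  interpret I: sext UNIV UNIV f by (rule sext_univ[OF assms])
  have S: "I.S = SC" unfolding I.S_def using S_univ .
  have S': "I.S' = SC" unfolding I.S'_def using S_univ .
  show ?thesis
  proof (intro exI conjI allI impI ballI)
    have a1: "\<forall>u\<in>SC. I.G u \<in> SC" using I.G_S' S S' by blast
    have a2: "I.G (semb x) = semb (f x)" if "x \<in> UNIV" for x using I.G_semb that by blast
    have a3: "sincr SC I.G" unfolding sincr_def using I.G_mono S by blast
    have a4: "left_oc SC I.G" using I.G_loc S by simp
    show "is_sup_ext f I.G" unfolding is_sup_ext_def
      by (intro conjI a1 a3 a4 allI impI a2) simp_all
    fix h assume h: "is_sup_ext f h"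
    then have h2: "left_oc I.S h" using S unfolding is_sup_ext_def by simp
    have h1: "\<And>x. x \<in> UNIV \<Longrightarrow> h (semb x) = semb (f x)" using h unfolding is_sup_ext_def by simp
    show "\<And>u. u \<in> SC \<Longrightarrow> h u = I.G u"
    proof -
      fix u :: "'a set set" assume "u \<in> SC"
      then have "u \<in> I.S" using S by simp
      then show "h u = I.G u" using h1 h2 by (intro I.G_unique[of h u]) auto
    qed
  next
    assume ad: "additive_map f"
    have "sadditive I.S I.G" by (rule I.G_add) (use ad in \<open>simp_all add: additive_map_def\<close>)
    then show "sadditive SC I.G" using S by simp
  next
    assume ph: "poshom_map f"
    have "sposhom I.S I.G" by (rule I.G_hom) (use ph in \<open>simp_all add: poshom_map_def\<close>)
    then show "sposhom SC I.G" using S by simp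
  qed
qed

lemma part2:
  fixes f :: "'a::dc_riesz_space \<Rightarrow> 'b::dc_riesz_space"
  assumes "\<forall>x. 0 \<le> x \<longrightarrow> 0 \<le> f x" "mono_on {x. 0 \<le> x} f" "order_continuous_pos f"
  shows "\<exists>g. is_sup_ext_pos f g \<and> (\<forall>h. is_sup_ext_pos f h \<longrightarrow> (\<forall>u\<in>SCpos. h u = g u)) \<and>
           (additive_pos f \<longrightarrow> sadditive SCpos g) \<and> (poshom_pos f \<longrightarrow> sposhom SCpos g)"
proof -
  interpret I: sext "{x. 0 \<le> x}" "{x. 0 \<le> x}" f by (rule sext_pos[OF assms])
  have S: "I.S = SCpos" unfolding I.S_def using S_pos .
  have S': "I.S' = SCpos" unfolding I.S'_def using S_pos .
  show ?thesis
  proof (intro exI conjI allI impI ballI)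
    have a1: "\<forall>u\<in>SCpos. I.G u \<in> SCpos" using I.G_S' S S' by blast
    have a2: "I.G (semb x) = semb (f x)" if "x \<in> {x. 0 \<le> x}" for x using I.G_semb that by blast
    have a3: "sincr SCpos I.G" unfolding sincr_def using I.G_mono S by blast
    have a4: "left_oc SCpos I.G" using I.G_loc S by simp
    show "is_sup_ext_pos f I.G" unfolding is_sup_ext_pos_def
      by (intro conjI a1 a3 a4 allI impI a2) simp_all
    fix h assume h: "is_sup_ext_pos f h"
    then have h2: "left_oc I.S h" using S unfolding is_sup_ext_pos_def by simp
    have h1: "\<And>x. x \<in> {x. 0 \<le> x} \<Longrightarrow> h (semb x) = semb (f x)" using h unfolding is_sup_ext_pos_def by simp
    show "\<And>u. u \<in> SCpos \<Longrightarrow> h u = I.G u"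
    proof -
      fix u :: "'a set set" assume "u \<in> SCpos"
      then have "u \<in> I.S" using S by simp
      then show "h u = I.G u" using h1 h2 by (intro I.G_unique[of h u]) auto
    qed
  next
    assume ad: "additive_pos f"
    have "sadditive I.S I.G"
    proof (rule I.G_add)
      show "\<And>x y. x \<in> {x. 0 \<le> x} \<Longrightarrow> y \<in> {x. 0 \<le> x} \<Longrightarrow> f (x + y) = f x + f y"
        using ad unfolding additive_pos_def by simp
      show "\<And>x y. x \<in> {x::'a. 0 \<le> x} \<Longrightarrow> y \<in> {x. 0 \<le> x} \<Longrightarrow> x + y \<in> {x. 0 \<le> x}"
        by (simp add: add_nonneg_nonneg)
    qed
    then show "sadditive SCpos I.G" using S by simp
  next
    assume ph: "poshom_pos f"
    have "sposhom I.S I.G"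
    proof (rule I.G_hom)
      show "\<And>t x. 0 \<le> t \<Longrightarrow> x \<in> {x. 0 \<le> x} \<Longrightarrow> f (t *\<^sub>R x) = t *\<^sub>R f x"
        using ph unfolding poshom_pos_def by simp
      show "\<And>t x. 0 \<le> t \<Longrightarrow> x \<in> {x::'a. 0 \<le> x} \<Longrightarrow> t *\<^sub>R x \<in> {x. 0 \<le> x}"
        by (simp add: scaleR_nonneg_nonneg)
    qed
    then show "sposhom SCpos I.G" using S by simp
  qed
qed



lemma g_eq_G:
  fixes f :: "'a::dc_riesz_space \<Rightarrow> 'b::dc_riesz_space"
  assumes "mono f" "order_continuous f" "is_sup_ext f g" "u \<in> SC"
  shows "g u = sext.G UNIV f u"
proof -
  interpret I: sext UNIV UNIV f by (rule sext_univ[OF assms(1,2)])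
  have S: "I.S = SC" unfolding I.S_def using S_univ .
  have h1: "\<And>x. x \<in> UNIV \<Longrightarrow> g (semb x) = semb (f x)" using assms(3) unfolding is_sup_ext_def by simp
  have h2: "left_oc I.S g" using assms(3) S unfolding is_sup_ext_def by simp
  have "u \<in> I.S" using assms(4) S by simp
  then show ?thesis using h1 h2 by (intro I.G_unique[of g u]) auto
qed

lemma G_cl_univ:
  fixes f :: "'a::dc_riesz_space \<Rightarrow> 'b::dc_riesz_space"
  assumes "mono f" "order_continuous f" "A \<in> Dirs"
  shows "sext.G UNIV f (cl A) = cl (f ` A)"
proof -
  interpret I: sext UNIV UNIV f by (rule sext_univ[OF assms(1,2)])
  show ?thesis using I.G_cl[OF assms(3)] by simp
qed

lemma G_form_univ:
  fixes f :: "'a::dc_riesz_space \<Rightarrow> 'b::dc_riesz_space"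
  assumes "mono f" "order_continuous f" "u \<in> SC"
  shows "\<exists>B. B \<in> Dirs \<and> sext.G UNIV f u = cl (f ` B)"
proof -
  interpret I: sext UNIV UNIV f by (rule sext_univ[OF assms(1,2)])
  have S: "I.S = SC" unfolding I.S_def using S_univ .
  have "I.R u \<in> Dirs" using I.R_Dirs assms(3) S by simp
  then show ?thesis unfolding I.G_def by blast
qed

lemma img_Dirs_mono:
  assumes "mono f" "A \<in> Dirs" shows "f ` A \<in> Dirs"
proof (rule DirsI)
  show "f ` A \<noteq> {}" using DirsD(1)[OF assms(2)] by simp
  fix x y assume "x \<in> f ` A" "y \<in> f ` A"
  then obtain a b where ab: "a \<in> A" "b \<in> A" "x = f a" "y = f b" by auto
  obtain c where "c \<in> A" "a \<le> c" "b \<le> c" using DirsD(2)[OF assms(2) ab(1,2)] by blast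
  then show "\<exists>z\<in>f ` A. x \<le> z \<and> y \<le> z" using ab assms(1)
    by (intro bexI[of _ "f c"]) (auto intro: monoD)
qed

lemma image_id_on: "(\<And>x. x \<in> B \<Longrightarrow> f x = x) \<Longrightarrow> f ` B = B"
proof -
  assume "\<And>x. x \<in> B \<Longrightarrow> f x = x"
  then have "f ` B = id ` B" by (intro image_cong) auto
  then show ?thesis by simp
qed

lemma sub_SC_E:
  assumes "u \<in> sub_SC Z" "\<And>x y. x \<in> Z \<Longrightarrow> y \<in> Z \<Longrightarrow> sup x y \<in> Z"
  shows "\<exists>A. A \<noteq> {} \<and> supcl A \<subseteq> Z \<and> u = cl (supcl A)"
proof -
  obtain A where A: "A \<noteq> {}" "A \<subseteq> Z" "is_slub (semb ` A) u" using assms(1) unfolding sub_SC_def by blast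
  have "u = cl (supcl A)" using slub_unique[OF A(3) slub_supcl[OF A(1)]] .
  moreover have "supcl A \<subseteq> Z" using supcl_sub[OF assms(2) A(2)] by blast
  ultimately show ?thesis using A(1) by blast
qed

lemma sub_SC_I:
  assumes "B \<in> Dirs" "B \<subseteq> Z" shows "cl B \<in> sub_SC Z"
  unfolding sub_SC_def using slub_Dirs[OF assms(1)] DirsD(1)[OF assms(1)] assms(2) by blast

lemma part3:
  fixes f :: "'a::dc_riesz_space \<Rightarrow> 'a"
  assumes mo: "mono f" and oc: "order_continuous f" and idem: "f \<circ> f = f" and rs: "riesz_subspace (range f)"
  shows "regular_subspace (range f) \<and> (\<forall>g. is_sup_ext f g \<longrightarrow> g ` SC = sub_SC (range f))"
proof
  have fid: "f x = x" if "x \<in> range f" for x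
    using that idem by (auto simp: fun_eq_iff)
  have supZ: "\<And>x y. x \<in> range f \<Longrightarrow> y \<in> range f \<Longrightarrow> sup x y \<in> range f"
    using rs unfolding riesz_subspace_def by blast
  show "regular_subspace (range f)" unfolding regular_subspace_def
  proof (intro conjI allI impI)
    show "riesz_subspace (range f)" by (rule rs)
    fix A z assume Ane: "A \<noteq> {}" and AZ: "A \<subseteq> range f" and lub: "is_lub_on (range f) A z"
    have zZ: "z \<in> range f" and zub: "\<And>a. a \<in> A \<Longrightarrow> a \<le> z"
      using lub unfolding is_lub_on_def by auto
    have D: "supcl A \<in> Dirs" by (rule supcl_Dirs[OF Ane])
    have DZ: "supcl A \<subseteq> range f" by (rule supcl_sub[OF supZ AZ])
    have bdd: "bdd_above (supcl A)"
    proof (rule bdd_aboveI[of _ z])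
      fix x assume "x \<in> supcl A" then show "x \<le> z" using zub by (rule supcl_ub)
    qed
    have e1: "f (Sup (supcl A)) = Sup (f ` supcl A)" by (rule oc_mono_Sup[OF mo oc D bdd])
    have e2: "f ` supcl A = supcl A" 
    proof (rule image_id_on)
      fix x assume "x \<in> supcl A" then have "x \<in> range f" using DZ by blast
      then show "f x = x" by (rule fid)
    qed
    have fw: "f (Sup (supcl A)) = Sup (supcl A)" using e1 e2 by simp
    have "f (Sup (supcl A)) \<in> range f" by (rule rangeI)
    then have wZ: "Sup (supcl A) \<in> range f" by (simp only: fw)
    have wub: "a \<le> Sup (supcl A)" if "a \<in> A" for a using cSup_upper[OF supcl.base[OF that] bdd] .
    have wl: "Sup (supcl A) \<le> y" if y: "\<And>a. a \<in> A \<Longrightarrow> a \<le> y" for y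
    proof (rule cSup_least[OF DirsD(1)[OF D]])
      fix x assume "x \<in> supcl A" then show "x \<le> y" using y by (rule supcl_ub)
    qed
    have zl: "\<And>w. w \<in> range f \<Longrightarrow> (\<forall>a\<in>A. a \<le> w) \<Longrightarrow> z \<le> w" using lub unfolding is_lub_on_def by blast
    have "z \<le> Sup (supcl A)" using wub by (intro zl[OF wZ]) blast
    moreover have "Sup (supcl A) \<le> z" using wl zub by blast
    ultimately have zw: "z = Sup (supcl A)" by (rule order.antisym)
    show "is_lub_on UNIV A z" unfolding is_lub_on_def
    proof (intro conjI ballI allI impI)
      show "z \<in> UNIV" by simp
      fix a assume "a \<in> A" then show "a \<le> z" by (rule zub)
    next
      fix y assume "y \<in> UNIV" "\<forall>a\<in>A. a \<le> y"
      then show "z \<le> y" using zw wl[of y] by simp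
    qed
  qed
  show "\<forall>g. is_sup_ext f g \<longrightarrow> g ` SC = sub_SC (range f)"
  proof (intro allI impI)
    fix g assume g: "is_sup_ext f g"
    show "g ` SC = sub_SC (range f)"
    proof
      show "g ` SC \<subseteq> sub_SC (range f)"
      proof
        fix v assume "v \<in> g ` SC"
        then obtain u where u: "u \<in> SC" "v = g u" by auto
        obtain B where B: "B \<in> Dirs" "sext.G UNIV f u = cl (f ` B)" using G_form_univ[OF mo oc u(1)] by blast
        have "v = cl (f ` B)" using u g_eq_G[OF mo oc g u(1)] B(2) by simp
        then show "v \<in> sub_SC (range f)" using sub_SC_I[OF img_Dirs_mono[OF mo B(1)]] by auto
      qed
      show "sub_SC (range f) \<subseteq> g ` SC"
      proof
        fix u assume "u \<in> sub_SC (range f)"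
        then obtain A where A: "A \<noteq> {}" "supcl A \<subseteq> range f" "u = cl (supcl A)"
          using sub_SC_E[of u "range f", OF _ supZ] by blast
        have D: "supcl A \<in> Dirs" by (rule supcl_Dirs[OF A(1)])
        have uSC: "u \<in> SC" using A(3) cl_in_SC[OF D] by simp
        have e2: "f ` supcl A = supcl A" 
    proof (rule image_id_on)
      fix x assume "x \<in> supcl A" then have "x \<in> range f" using A(2) by blast
      then show "f x = x" by (rule fid)
    qed
        have "g u = sext.G UNIV f u" by (rule g_eq_G[OF mo oc g uSC])
        also have "\<dots> = sext.G UNIV f (cl (supcl A))" by (simp only: A(3)[symmetric])
        also have "\<dots> = cl (f ` supcl A)" by (rule G_cl_univ[OF mo oc D])
        also have "\<dots> = cl (supcl A)" by (simp only: e2)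
        also have "\<dots> = u" using A(3) by (rule sym)
        finally have "g u = u" .
        then show "u \<in> g ` SC" using uSC by (intro image_eqI[of u g u]) simp_all
      qed
    qed
  qed
qed

lemma part4:
  fixes f :: "'a::dc_riesz_space \<Rightarrow> 'a"
  assumes mo: "mono f" and oc: "order_continuous f" and rs: "regular_subspace Z" and inv: "f ` Z \<subseteq> Z"
  shows "\<forall>g. is_sup_ext f g \<longrightarrow> g ` sub_SC Z \<subseteq> sub_SC Z"
proof (intro allI impI subsetI)
  fix g v assume g: "is_sup_ext f g" and "v \<in> g ` sub_SC Z"
  then obtain u where u: "u \<in> sub_SC Z" "v = g u" by auto
  have supZ: "\<And>x y. x \<in> Z \<Longrightarrow> y \<in> Z \<Longrightarrow> sup x y \<in> Z"
    using rs unfolding regular_subspace_def riesz_subspace_def by blast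
  obtain A where A: "A \<noteq> {}" "supcl A \<subseteq> Z" "u = cl (supcl A)" using sub_SC_E[OF u(1) supZ] by blast
  have D: "supcl A \<in> Dirs" by (rule supcl_Dirs[OF A(1)])
  have uSC: "u \<in> SC" using A(3) cl_in_SC[OF D] by simp
  have "g u = sext.G UNIV f u" by (rule g_eq_G[OF mo oc g uSC])
  also have "\<dots> = sext.G UNIV f (cl (supcl A))" by (simp only: A(3)[symmetric])
  also have "\<dots> = cl (f ` supcl A)" by (rule G_cl_univ[OF mo oc D])
  finally have "v = cl (f ` supcl A)" using u(2) by simp
  moreover have "f ` supcl A \<subseteq> Z" using A(2) inv by blast
  ultimately show "v \<in> sub_SC Z" using sub_SC_I[OF img_Dirs_mono[OF mo D]] by simp
qed

theorem theoremP1: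
  shows
  "(\<forall>f :: 'a::dc_riesz_space \<Rightarrow> 'b::dc_riesz_space.
      mono f \<and> order_continuous f \<longrightarrow>
      (\<exists>g. is_sup_ext f g \<and> (\<forall>h. is_sup_ext f h \<longrightarrow> (\<forall>u\<in>SC. h u = g u)) \<and>
           (additive_map f \<longrightarrow> sadditive SC g) \<and> (poshom_map f \<longrightarrow> sposhom SC g)))
   \<and>
   (\<forall>f :: 'a \<Rightarrow> 'b.
      (\<forall>x. 0 \<le> x \<longrightarrow> 0 \<le> f x) \<and> mono_on {x. 0 \<le> x} f \<and> order_continuous_pos f \<longrightarrow>
      (\<exists>g. is_sup_ext_pos f g \<and> (\<forall>h. is_sup_ext_pos f h \<longrightarrow> (\<forall>u\<in>SCpos. h u = g u)) \<and>
           (additive_pos f \<longrightarrow> sadditive SCpos g) \<and> (poshom_pos f \<longrightarrow> sposhom SCpos g)))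
   \<and>
   (\<forall>f :: 'a \<Rightarrow> 'a.
      mono f \<and> order_continuous f \<and> linear f \<and> f \<circ> f = f \<and> riesz_subspace (range f) \<longrightarrow>
      regular_subspace (range f) \<and>
      (\<forall>g. is_sup_ext f g \<longrightarrow> g ` SC = sub_SC (range f)))
   \<and>
   (\<forall>(f :: 'a \<Rightarrow> 'a) Z.
      mono f \<and> order_continuous f \<and> linear f \<and> regular_subspace Z \<and> f ` Z \<subseteq> Z \<longrightarrow>
      (\<forall>g. is_sup_ext f g \<longrightarrow> g ` sub_SC Z \<subseteq> sub_SC Z))"
proof (intro conjI allI impI)
  fix f :: "'a \<Rightarrow> 'b" assume "mono f \<and> order_continuous f"
  then show "\<exists>g. is_sup_ext f g \<and> (\<forall>h. is_sup_ext f h \<longrightarrow> (\<forall>u\<in>SC. h u = g u)) \<and>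
           (additive_map f \<longrightarrow> sadditive SC g) \<and> (poshom_map f \<longrightarrow> sposhom SC g)"
    using part1 by blast
next
  fix f :: "'a \<Rightarrow> 'b" assume "(\<forall>x. 0 \<le> x \<longrightarrow> 0 \<le> f x) \<and> mono_on {x. 0 \<le> x} f \<and> order_continuous_pos f"
  then show "\<exists>g. is_sup_ext_pos f g \<and> (\<forall>h. is_sup_ext_pos f h \<longrightarrow> (\<forall>u\<in>SCpos. h u = g u)) \<and>
           (additive_pos f \<longrightarrow> sadditive SCpos g) \<and> (poshom_pos f \<longrightarrow> sposhom SCpos g)"
    using part2 by blast
next
  fix f :: "'a \<Rightarrow> 'a" assume h: "mono f \<and> order_continuous f \<and> linear f \<and> f \<circ> f = f \<and> riesz_subspace (range f)"
  have "regular_subspace (range f) \<and> (\<forall>g. is_sup_ext f g \<longrightarrow> g ` SC = sub_SC (range f))"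
    using h by (intro part3) auto
  then show "regular_subspace (range f)" "\<And>g. is_sup_ext f g \<Longrightarrow> g ` SC = sub_SC (range f)" by auto
next
  fix f :: "'a \<Rightarrow> 'a" and Z assume h: "mono f \<and> order_continuous f \<and> linear f \<and> regular_subspace Z \<and> f ` Z \<subseteq> Z"
  have "\<forall>g. is_sup_ext f g \<longrightarrow> g ` sub_SC Z \<subseteq> sub_SC Z" using h by (intro part4) auto
  then show "\<And>g. is_sup_ext f g \<Longrightarrow> g ` sub_SC Z \<subseteq> sub_SC Z" by auto
qed

end
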